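(* Let $X_1,X_2,\dots$ be i.i.d. $N(\mu,\sigma^2)$ with $\mu\in\mathbb{R}$, $\sigma>0$. For $n\ge2$ let $S_n^2=(n-1)^{-1}\sum_{i=1}^n(X_i-\bar X_n)^2$ with $\bar X_n=n^{-1}\sum_{i=1}^nX_i$. Let $A>0$, $c>0$, $n^*=\sigma\sqrt{A/c}$, fix an integer $k\ge1$ and $0<\rho\le1$, let $m=m_0k+1$ for an integer $m_0\ge1$, and define $$T=\inf\{n\ge 0:\ m+kn\ge \rho S_{m+kn}\sqrt{A/c}\},\qquad N=\lfloor \rho^{-1}(m+kT)\rfloor+1,$$ where $\lfloor u\rfloor$ denotes the largest integer strictly smaller than $u$. Consider the limit operations $m_0\to\infty$, $m\to\infty$, $c=O(m^{-2r})$, $n^*=O(m^r)$ and $\limsup m/n^*<\rho$, with $r>1$ fixed. Then for any arbitrary $0<\varepsilon<1$, with some $\gamma\ge2$, under these limit operations, $$P_{\mu,\sigma}(N\le \varepsilon n^* )=O\big(n^{*\,-\gamma/(2r)}\big).$$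
   Context: $P_{\mu,\sigma}$ denotes probability under $N(\mu,\sigma^2)$. *)

theory Defs
  imports "HOL-Probability.Probability" "HOL-Library.Landau_Symbols"
begin

definition xbar :: "(nat \<Rightarrow> 'a \<Rightarrow> real) \<Rightarrow> nat \<Rightarrow> 'a \<Rightarrow> real" where
  "xbar X n \<omega> = (\<Sum>i=1..n. X i \<omega>) / real n"

definition sampleS :: "(nat \<Rightarrow> 'a \<Rightarrow> real) \<Rightarrow> nat \<Rightarrow> 'a \<Rightarrow> real" where
  "sampleS X n \<omega> = sqrt ((\<Sum>i=1..n. (X i \<omega> - xbar X n \<omega>)\<^sup>2) / (real n - 1))"

definition stop_cond :: "(nat \<Rightarrow> 'a \<Rightarrow> real) \<Rightarrow> nat \<Rightarrow> nat \<Rightarrow> real \<Rightarrow> real \<Rightarrow> real \<Rightarrow> nat \<Rightarrow> 'a \<Rightarrow> bool" where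
  "stop_cond X m k \<rho> A c n \<omega> \<longleftrightarrow> real (m + k * n) \<ge> \<rho> * sampleS X (m + k * n) \<omega> * sqrt (A / c)"

text \<open>T = inf of stages at which stopping occurs (meaningful only when that set is nonempty).\<close>
definition stopT :: "(nat \<Rightarrow> 'a \<Rightarrow> real) \<Rightarrow> nat \<Rightarrow> nat \<Rightarrow> real \<Rightarrow> real \<Rightarrow> real \<Rightarrow> 'a \<Rightarrow> nat" where
  "stopT X m k \<rho> A c \<omega> = (LEAST n. stop_cond X m k \<rho> A c n \<omega>)"

definition strict_floor :: "real \<Rightarrow> int" where
  "strict_floor u = \<lceil>u\<rceil> - 1"

definition stopN :: "(nat \<Rightarrow> 'a \<Rightarrow> real) \<Rightarrow> nat \<Rightarrow> nat \<Rightarrow> real \<Rightarrow> real \<Rightarrow> real \<Rightarrow> 'a \<Rightarrow> int" where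
  "stopN X m k \<rho> A c \<omega> = strict_floor (real (m + k * stopT X m k \<rho> A c \<omega>) / \<rho>) + 1"

text \<open>The event {N <= eps n*}; if the stopping set is empty, T = N = infinity and the event fails.\<close>
definition early_event :: "'a measure \<Rightarrow> (nat \<Rightarrow> 'a \<Rightarrow> real) \<Rightarrow> nat \<Rightarrow> nat \<Rightarrow> real \<Rightarrow> real \<Rightarrow> real \<Rightarrow> real \<Rightarrow> real \<Rightarrow> 'a set" where
  "early_event M X m k \<rho> A c \<epsilon> nstar =
     {\<omega> \<in> space M. (\<exists>n. stop_cond X m k \<rho> A c n \<omega>) \<and> real_of_int (stopN X m k \<rho> A c \<omega>) \<le> \<epsilon> * nstar}"

end

theory Submission
  imports Defs
begin


lemma exp_neg_le_quad: "0 \<le> (x::real) \<Longrightarrow> exp (-x) \<le> 1 - x + x^2/2"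
proof -
  assume x: "0 \<le> x"
  have e: "1 + x + x^2/2 \<le> exp x" using exp_lower_Taylor_quadratic[OF x] .
  have p: "0 < 1 + x + x^2/2" using x by (simp add: add_pos_nonneg)
  have q: "(1 + x + x^2/2) * (1 - x + x^2/2) = 1 + x^4/4"
    by (simp add: algebra_simps power2_eq_square power4_eq_xxxx)
  have "0 \<le> x^4" by simp
  then have "1 \<le> (1 + x + x^2/2) * (1 - x + x^2/2)" using q by linarith
  then have "1 \<le> exp x * (1 - x + x^2/2)"
  proof -
    have eq: "1 - x + x^2/2 = ((x-1)^2 + 1)/2" by (simp add: power2_eq_square field_simps)
    have "0 \<le> ((x-1)^2 + 1)/2" by simp
    then have "0 \<le> (1 - x + x^2/2)" by (subst eq)
    then have "(1 + x + x^2/2) * (1 - x + x^2/2) \<le> exp x * (1 - x + x^2/2)"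
      using e by (rule mult_right_mono[rotated])
    then show ?thesis using \<open>1 \<le> (1 + x + x^2/2) * (1 - x + x^2/2)\<close> by linarith
  qed
  then show ?thesis by (simp add: exp_minus field_simps)
qed

lemma (in prob_space) normal_moments:
  assumes s: "0 < \<sigma>" and D: "distributed M lborel Y (normal_density \<mu> \<sigma>)"
  shows "integrable M (\<lambda>\<omega>. (Y \<omega> - \<mu>)^n)"
    and "expectation (\<lambda>\<omega>. (Y \<omega> - \<mu>)^2) = \<sigma>^2"
    and "expectation (\<lambda>\<omega>. (Y \<omega> - \<mu>)^4) = 3*\<sigma>^4"
proof -
  show "integrable M (\<lambda>\<omega>. (Y \<omega> - \<mu>)^n)"
    using distributed_integrable[OF D, of "\<lambda>x. (x-\<mu>)^n"] integrable_normal_moment[OF s, of \<mu> n] by simp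
  have "expectation (\<lambda>\<omega>. (Y \<omega> - \<mu>)^(2*1)) = fact (2*1) / ((2/\<sigma>\<^sup>2)^1 * fact 1)"
    using distributed_integral[OF D, of "\<lambda>x. (x-\<mu>)^(2*1)"] integral_normal_moment_even[OF s, of \<mu> 1] by simp
  then show "expectation (\<lambda>\<omega>. (Y \<omega> - \<mu>)^2) = \<sigma>^2" by simp
  have "expectation (\<lambda>\<omega>. (Y \<omega> - \<mu>)^(2*2)) = fact (2*2) / ((2/\<sigma>\<^sup>2)^2 * fact 2)"
    using distributed_integral[OF D, of "\<lambda>x. (x-\<mu>)^(2*2)"] integral_normal_moment_even[OF s, of \<mu> 2] by simp
  moreover have "(fact (2*2)::real) = 24" by (simp add: fact_numeral)
  moreover have "(fact 2::real) = 2" by (simp add: fact_numeral)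
  moreover have "24 / ((2/\<sigma>\<^sup>2)^2 * 2) = 3*\<sigma>^4" using s
    by (simp add: power_divide power2_eq_square power4_eq_xxxx)
  ultimately show "expectation (\<lambda>\<omega>. (Y \<omega> - \<mu>)^4) = 3*\<sigma>^4" by simp
qed

lemma (in prob_space) chernoff_lower:
  fixes t d \<mu> \<sigma> :: real
  assumes indep: "indep_vars (\<lambda>_. borel) X UNIV"
    and D: "\<And>i. distributed M lborel (X i) (\<lambda>x. ennreal (normal_density \<mu> \<sigma> x))"
    and s: "0 < \<sigma>" and t: "0 < t" and J: "finite J"
  shows "prob {\<omega>\<in>space M. (\<Sum>i\<in>J. (X i \<omega> - \<mu>)^2/\<sigma>^2) \<le> d * card J}
         \<le> exp (t * d * card J) * (1 - t + 3*t^2/2)^(card J)"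
proof -
  have Xm[measurable]: "X i \<in> borel_measurable M" for i
    using distributed_measurable[OF D[of i]] by simp
  define Z where "Z i \<omega> = exp (- t * ((X i \<omega> - \<mu>)^2/\<sigma>^2))" for i \<omega>
  have Zm[measurable]: "Z i \<in> borel_measurable M" for i unfolding Z_def by measurable
  have Zb: "0 \<le> Z i \<omega> \<and> Z i \<omega> \<le> 1" for i \<omega>
    unfolding Z_def using t by auto
  have Zint: "integrable M (Z i)" for i
    by (rule integrable_const_bound[where B=1]) (use Zb in auto)
  have indZ: "indep_vars (\<lambda>_. borel) Z J"
  proof -
    have "indep_vars (\<lambda>_. borel) (\<lambda>i x. (\<lambda>y. exp (- t * ((y - \<mu>)^2/\<sigma>^2))) (X i x)) UNIV"
      by (rule indep_vars_compose2[OF indep]) measurable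
    then have "indep_vars (\<lambda>_. borel) Z UNIV" unfolding Z_def by simp
    then show ?thesis by (rule indep_vars_subset) auto
  qed
  define q where "q = 1 - t + 3*t^2/2"
  have EZ: "expectation (Z i) \<le> q" for i
  proof -
    let ?V = "\<lambda>\<omega>. (X i \<omega> - \<mu>)^2/\<sigma>^2"
    have i2: "integrable M (\<lambda>\<omega>. (X i \<omega> - \<mu>)^2)" and i4: "integrable M (\<lambda>\<omega>. (X i \<omega> - \<mu>)^4)"
      using normal_moments(1)[OF s D[of i]] by auto
    have e2: "expectation (\<lambda>\<omega>. (X i \<omega> - \<mu>)^2) = \<sigma>^2"
      and e4: "expectation (\<lambda>\<omega>. (X i \<omega> - \<mu>)^4) = 3*\<sigma>^4"
      using normal_moments(2,3)[OF s D[of i]] by auto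
    have ip: "integrable M (\<lambda>\<omega>. 1 - (t/\<sigma>^2) * (X i \<omega> - \<mu>)^2 + (t^2/(2*\<sigma>^4)) * (X i \<omega> - \<mu>)^4)"
      using i2 i4 by auto
    have "expectation (Z i) \<le> expectation (\<lambda>\<omega>. 1 - (t/\<sigma>^2) * (X i \<omega> - \<mu>)^2 + (t^2/(2*\<sigma>^4)) * (X i \<omega> - \<mu>)^4)"
    proof (rule integral_mono[OF Zint ip])
      fix \<omega>
      have "Z i \<omega> \<le> 1 - t * ?V \<omega> + (t * ?V \<omega>)^2/2"
        unfolding Z_def using exp_neg_le_quad[of "t * ?V \<omega>"] t by auto
      also have "\<dots> = 1 - (t/\<sigma>^2) * (X i \<omega> - \<mu>)^2 + (t^2/(2*\<sigma>^4)) * (X i \<omega> - \<mu>)^4"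
        using s by (simp add: field_simps power2_eq_square power4_eq_xxxx)
      finally show "Z i \<omega> \<le> 1 - (t/\<sigma>^2) * (X i \<omega> - \<mu>)^2 + (t^2/(2*\<sigma>^4)) * (X i \<omega> - \<mu>)^4" .
    qed
    also have "\<dots> = 1 - (t/\<sigma>^2) * \<sigma>^2 + (t^2/(2*\<sigma>^4)) * (3*\<sigma>^4)"
      using i2 i4 e2 e4 prob_space by simp
    also have "\<dots> = q" unfolding q_def using s by (simp add: field_simps)
    finally show ?thesis .
  qed
  have EP: "expectation (\<lambda>\<omega>. \<Prod>i\<in>J. Z i \<omega>) \<le> q ^ card J"
  proof -
    have "expectation (\<lambda>\<omega>. \<Prod>i\<in>J. Z i \<omega>) = (\<Prod>i\<in>J. expectation (Z i))"
      by (rule indep_vars_lebesgue_integral[OF J indZ Zint])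
    also have "\<dots> \<le> (\<Prod>i\<in>J. q)"
      by (rule prod_mono) (use EZ Zb in \<open>auto intro: integral_nonneg_AE\<close>)
    finally show ?thesis by simp
  qed
  have Pint: "integrable M (\<lambda>\<omega>. \<Prod>i\<in>J. Z i \<omega>)"
    by (rule indep_vars_integrable[OF J indZ Zint])
  have prodZ: "(\<Prod>i\<in>J. Z i \<omega>) = exp (- t * (\<Sum>i\<in>J. (X i \<omega> - \<mu>)^2/\<sigma>^2))" for \<omega>
    unfolding Z_def using J by (simp add: exp_sum[symmetric] sum_distrib_left sum_negf)
  have sub: "{\<omega>\<in>space M. (\<Sum>i\<in>J. (X i \<omega> - \<mu>)^2/\<sigma>^2) \<le> d * card J}
      \<subseteq> {\<omega>\<in>space M. (\<Prod>i\<in>J. Z i \<omega>) \<ge> exp (- t * (d * card J))}"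
    using t by (auto simp: prodZ)
  have "prob {\<omega>\<in>space M. (\<Sum>i\<in>J. (X i \<omega> - \<mu>)^2/\<sigma>^2) \<le> d * card J}
      \<le> prob {\<omega>\<in>space M. (\<Prod>i\<in>J. Z i \<omega>) \<ge> exp (- t * (d * card J))}"
    by (rule finite_measure_mono[OF sub]) measurable
  also have "\<dots> \<le> expectation (\<lambda>\<omega>. \<Prod>i\<in>J. Z i \<omega>) / exp (- t * (d * card J))"
    by (rule integral_Markov_inequality_measure[OF Pint, where A="space M"])
       (use Zb in \<open>auto intro: prod_nonneg\<close>)
  also have "\<dots> \<le> q ^ card J / exp (- t * (d * card J))"
    by (rule divide_right_mono[OF EP]) simp
  also have "\<dots> = exp (t * d * card J) * (1 - t + 3*t^2/2)^(card J)"
    unfolding q_def by (simp add: exp_minus field_simps)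
  finally show ?thesis .
qed


lemma (in prob_space) mean_tail:
  fixes \<mu> \<sigma> a :: real
  assumes indep: "indep_vars (\<lambda>_. borel) X UNIV"
    and D: "\<And>i. distributed M lborel (X i) (\<lambda>x. ennreal (normal_density \<mu> \<sigma> x))"
    and s: "0 < \<sigma>" and a: "0 < a" and J: "finite J" "J \<noteq> {}"
  shows "prob {\<omega>\<in>space M. a * (card J)^2 \<le> (\<Sum>i\<in>J. (X i \<omega> - \<mu>))^2} \<le> 3*\<sigma>^4/(a^2 * (card J)^2)"
proof -
  have Xm[measurable]: "X i \<in> borel_measurable M" for i
    using distributed_measurable[OF D[of i]] by simp
  define n where "n = real (card J)"
  have n: "0 < n" unfolding n_def using J by auto
  have DS: "distributed M lborel (\<lambda>x. \<Sum>i\<in>J. X i x) (normal_density (\<Sum>i\<in>J. \<mu>) (sqrt (\<Sum>i\<in>J. \<sigma>\<^sup>2)))"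
    by (rule sum_indep_normal[OF J]) (use indep_vars_subset[OF indep] s D in auto)
  have sq: "sqrt (\<Sum>i\<in>J. \<sigma>\<^sup>2) = sqrt n * \<sigma>" unfolding n_def using s by (simp add: real_sqrt_mult)
  have s': "0 < sqrt n * \<sigma>" using n s by simp
  have DS': "distributed M lborel (\<lambda>x. \<Sum>i\<in>J. X i x) (normal_density (n * \<mu>) (sqrt n * \<sigma>))"
    using DS sq unfolding n_def by simp
  have eqS: "(\<Sum>i\<in>J. (X i \<omega> - \<mu>)) = (\<Sum>i\<in>J. X i \<omega>) - n * \<mu>" for \<omega>
    unfolding n_def by (simp add: sum_subtractf)
  have i4: "integrable M (\<lambda>\<omega>. ((\<Sum>i\<in>J. X i \<omega>) - n * \<mu>)^4)"
    using normal_moments(1)[OF s' DS'] .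
  have e4: "expectation (\<lambda>\<omega>. ((\<Sum>i\<in>J. X i \<omega>) - n * \<mu>)^4) = 3 * (sqrt n * \<sigma>)^4"
    using normal_moments(3)[OF s' DS'] .
  have e4': "3 * (sqrt n * \<sigma>)^4 = 3 * n^2 * \<sigma>^4"
    using n by (simp add: power_mult_distrib power4_eq_xxxx power2_eq_square)
  have sub: "{\<omega>\<in>space M. a * (card J)^2 \<le> (\<Sum>i\<in>J. (X i \<omega> - \<mu>))^2}
     \<subseteq> {\<omega>\<in>space M. (a * n^2)^2 \<le> ((\<Sum>i\<in>J. X i \<omega>) - n * \<mu>)^4}"
  proof safe
    fix \<omega> assume "\<omega> \<in> space M" "a * (card J)^2 \<le> (\<Sum>i\<in>J. (X i \<omega> - \<mu>))^2"
    then have h: "a * n^2 \<le> ((\<Sum>i\<in>J. X i \<omega>) - n * \<mu>)^2" unfolding eqS n_def by simp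
    have "(a * n^2)^2 \<le> (((\<Sum>i\<in>J. X i \<omega>) - n * \<mu>)^2)^2"
      by (rule power_mono[OF h]) (use a n in simp)
    then show "(a * n^2)^2 \<le> ((\<Sum>i\<in>J. X i \<omega>) - n * \<mu>)^4" by simp
  qed
  have "prob {\<omega>\<in>space M. a * (card J)^2 \<le> (\<Sum>i\<in>J. (X i \<omega> - \<mu>))^2}
     \<le> prob {\<omega>\<in>space M. (a * n^2)^2 \<le> ((\<Sum>i\<in>J. X i \<omega>) - n * \<mu>)^4}"
    by (rule finite_measure_mono[OF sub]) measurable
  also have "\<dots> \<le> expectation (\<lambda>\<omega>. ((\<Sum>i\<in>J. X i \<omega>) - n * \<mu>)^4) / (a * n^2)^2"
    by (rule integral_Markov_inequality_measure[OF i4, where A="space M"]) (use a n in auto)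
  also have "\<dots> = 3*\<sigma>^4/(a^2 * (card J)^2)"
    unfolding e4 e4' using n a unfolding n_def by (simp add: power_mult_distrib power4_eq_xxxx power2_eq_square)
  finally show ?thesis .
qed


lemma var_identity:
  fixes y :: "nat \<Rightarrow> real"
  assumes J: "finite J" "J \<noteq> {}"
  shows "(\<Sum>i\<in>J. (y i - (\<Sum>l\<in>J. y l) / card J)^2) = (\<Sum>i\<in>J. (y i)^2) - (\<Sum>i\<in>J. y i)^2 / card J"
proof -
  define S where "S = (\<Sum>l\<in>J. y l)"
  define n where "n = real (card J)"
  have n: "0 < n" using J unfolding n_def by auto
  have "(\<Sum>i\<in>J. (y i - S / n)^2) = (\<Sum>i\<in>J. (y i)^2 - 2 * (S/n) * y i + (S/n)^2)"
    by (simp add: power2_diff algebra_simps)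
  also have "\<dots> = (\<Sum>i\<in>J. (y i)^2) - 2 * (S/n) * S + n * (S/n)^2"
    unfolding S_def n_def by (simp add: sum.distrib sum_subtractf sum_distrib_left)
  also have "\<dots> = (\<Sum>i\<in>J. (y i)^2) - S^2 / n"
    using n by (simp add: field_simps power2_eq_square)
  finally show ?thesis unfolding S_def n_def .
qed

lemma xbar_shift:
  assumes "j > 0"
  shows "(\<Sum>i=1..j. (X i \<omega> - xbar X j \<omega>)^2) = (\<Sum>i=1..j. (X i \<omega> - \<mu>)^2) - (\<Sum>i=1..j. (X i \<omega> - \<mu>))^2 / j"
proof -
  have "xbar X j \<omega> - \<mu> = (\<Sum>i=1..j. (X i \<omega> - \<mu>)) / card {1..j}"
    using assms unfolding xbar_def by (simp add: sum_subtractf field_simps)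
  then have "(\<Sum>i=1..j. (X i \<omega> - xbar X j \<omega>)^2) = (\<Sum>i=1..j. ((X i \<omega> - \<mu>) - (\<Sum>l=1..j. (X l \<omega> - \<mu>)) / card {1..j})^2)"
    by (intro sum.cong refl) (smt (verit))
  also have "\<dots> = (\<Sum>i=1..j. (X i \<omega> - \<mu>)^2) - (\<Sum>i=1..j. (X i \<omega> - \<mu>))^2 / card {1..j}"
    by (rule var_identity[where y="\<lambda>i. X i \<omega> - \<mu>"]) (use assms in auto)
  finally show ?thesis by simp
qed


lemma exp_neg_le_inv_sq:
  fixes b :: real assumes "0 < b" shows "exp (- b) \<le> 4 / b^2"
proof -
  have "1 + b/2 \<le> exp (b/2)" by (rule exp_ge_add_one_self)
  then have h: "b/2 \<le> exp (b/2)" using assms by linarith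
  have "(b/2)^2 \<le> (exp (b/2))^2" by (rule power_mono[OF h]) (use assms in simp)
  also have "(exp (b/2))^2 = exp b" by (simp add: power2_eq_square exp_add[symmetric])
  finally have "b^2/4 \<le> exp b" by (simp add: power_divide)
  then show ?thesis using assms by (simp add: exp_minus field_simps)
qed

lemma (in prob_space) sampleS_small:
  fixes \<mu> \<sigma> \<epsilon> :: real
  assumes indep: "indep_vars (\<lambda>_. borel) X UNIV"
    and D: "\<And>i. distributed M lborel (X i) (\<lambda>x. ennreal (normal_density \<mu> \<sigma> x))"
    and s: "0 < \<sigma>" and e: "0 < \<epsilon>" "\<epsilon> < 1" and j: "2 \<le> j"
  shows "prob {\<omega>\<in>space M. sampleS X j \<omega> \<le> \<epsilon>*\<sigma>}
     \<le> (4/((1-\<epsilon>^2)^2/24)^2 + 12/(1-\<epsilon>^2)^2) / (real j * (real j - 1))"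
proof -
  have Xm[measurable]: "X i \<in> borel_measurable M" for i
    using distributed_measurable[OF D[of i]] by simp
  define e2 where "e2 = \<epsilon>^2"
  have e2: "0 < e2" "e2 < 1" unfolding e2_def using e by (auto simp: power_less_one_iff)
  define \<delta> where "\<delta> = (1 + e2)/2"
  define t where "t = (1 - e2)/6"
  define \<beta> where "\<beta> = (1 - e2)^2/24"
  define a where "a = (1 - e2) * \<sigma>^2 / 2"
  have t: "0 < t" "t < 1" unfolding t_def using e2 by auto
  have \<beta>: "0 < \<beta>" unfolding \<beta>_def using e2 by auto
  have a: "0 < a" unfolding a_def using e2 s by auto
  define J where "J = {1..j}"
  have J: "finite J" "J \<noteq> {}" "card J = j" unfolding J_def using j by auto
  define E1 where "E1 = {\<omega>\<in>space M. (\<Sum>i\<in>J. (X i \<omega> - \<mu>)^2/\<sigma>^2) \<le> \<delta> * card J}"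
  define E2 where "E2 = {\<omega>\<in>space M. a * (card J)^2 \<le> (\<Sum>i\<in>J. (X i \<omega> - \<mu>))^2}"
  have sub: "{\<omega>\<in>space M. sampleS X j \<omega> \<le> \<epsilon>*\<sigma>} \<subseteq> E1 \<union> E2"
  proof
    fix \<omega> assume w: "\<omega> \<in> {\<omega>\<in>space M. sampleS X j \<omega> \<le> \<epsilon>*\<sigma>}"
    define Q where "Q = (\<Sum>i=1..j. (X i \<omega> - xbar X j \<omega>)^2)"
    have Q0: "0 \<le> Q" unfolding Q_def by (simp add: sum_nonneg)
    have j1: "0 < real j - 1" using j by simp
    have "sqrt (Q / (real j - 1)) \<le> \<epsilon>*\<sigma>" using w unfolding sampleS_def Q_def by simp
    then have "Q / (real j - 1) \<le> (\<epsilon>*\<sigma>)^2"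
      using Q0 j1 e s by (metis real_sqrt_le_iff real_sqrt_pow2_iff real_sqrt_power zero_le_mult_iff order.strict_implies_order divide_nonneg_pos real_sqrt_abs abs_of_nonneg mult_nonneg_nonneg)
    then have Qle: "Q \<le> e2 * \<sigma>^2 * (real j - 1)"
      using j1 unfolding e2_def by (simp add: field_simps power_mult_distrib)
    have Qeq: "Q = (\<Sum>i\<in>J. (X i \<omega> - \<mu>)^2) - (\<Sum>i\<in>J. (X i \<omega> - \<mu>))^2 / j"
      unfolding Q_def J_def using xbar_shift[of j X \<omega> \<mu>] j by simp
    show "\<omega> \<in> E1 \<union> E2"
    proof (rule ccontr)
      assume "\<omega> \<notin> E1 \<union> E2"
      then have n1: "\<delta> * j < (\<Sum>i\<in>J. (X i \<omega> - \<mu>)^2/\<sigma>^2)"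
        and n2: "(\<Sum>i\<in>J. (X i \<omega> - \<mu>))^2 < a * j^2"
        using w J unfolding E1_def E2_def by auto
      have "(\<Sum>i\<in>J. (X i \<omega> - \<mu>)^2/\<sigma>^2) = (\<Sum>i\<in>J. (X i \<omega> - \<mu>)^2)/\<sigma>^2"
        by (simp add: sum_divide_distrib)
      moreover have "\<delta> * j * \<sigma>^2 < (\<Sum>i\<in>J. (X i \<omega> - \<mu>)^2/\<sigma>^2) * \<sigma>^2"
        using n1 s by (intro mult_strict_right_mono) auto
      ultimately have n1': "\<delta> * j * \<sigma>^2 < (\<Sum>i\<in>J. (X i \<omega> - \<mu>)^2)"
        using s by simp
      have jp: "0 < real j" using j by simp
      have n2': "(\<Sum>i\<in>J. (X i \<omega> - \<mu>))^2 / j < a * j"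
        using n2 jp by (simp add: field_simps power2_eq_square)
      have "e2 * \<sigma>^2 * j < Q" using n1' n2' unfolding Qeq \<delta>_def a_def
        by (simp add: field_simps)
      moreover have "e2 * \<sigma>^2 * (real j - 1) \<le> e2 * \<sigma>^2 * j" using e2 s by simp
      ultimately show False using Qle by linarith
    qed
  qed
  have "prob {\<omega>\<in>space M. sampleS X j \<omega> \<le> \<epsilon>*\<sigma>} \<le> prob (E1 \<union> E2)"
    by (rule finite_measure_mono[OF sub]) (unfold E1_def E2_def, measurable)
  also have "\<dots> \<le> prob E1 + prob E2"
    by (rule measure_Un_le) (unfold E1_def E2_def, measurable)
  also have "prob E1 \<le> 4/\<beta>^2 / (real j * (real j - 1))"
  proof -
    have "prob E1 \<le> exp (t * \<delta> * j) * (1 - t + 3*t^2/2)^j"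
      using chernoff_lower[OF indep D s t(1) J(1), of \<delta>] J unfolding E1_def by simp
    also have "(1 - t + 3*t^2/2)^j \<le> (exp (- t + 3*t^2/2))^j"
    proof (rule power_mono)
      show "1 - t + 3*t^2/2 \<le> exp (- t + 3*t^2/2)"
        using exp_ge_add_one_self[of "- t + 3*t^2/2"] by (simp add: algebra_simps)
      show "0 \<le> 1 - t + 3*t^2/2" using t by (simp add: add_nonneg_nonneg)
    qed
    also have "exp (t * \<delta> * j) * (exp (- t + 3*t^2/2))^j = exp (- (\<beta> * j))"
    proof -
      have "exp (t * \<delta> * j) * (exp (- t + 3*t^2/2))^j = exp (t * \<delta> * j + j * (- t + 3*t^2/2))"
        by (simp add: exp_of_nat_mult[symmetric] exp_add)
      also have "t * \<delta> * j + j * (- t + 3*t^2/2) = - (\<beta> * j)"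
        unfolding t_def \<delta>_def \<beta>_def by (simp add: field_simps power2_eq_square)
      finally show ?thesis .
    qed
    also have "exp (- (\<beta> * j)) \<le> 4 / (\<beta> * j)^2"
      by (rule exp_neg_le_inv_sq) (use \<beta> j in simp)
    also have "\<dots> \<le> 4/\<beta>^2 / (real j * (real j - 1))"
      using \<beta> j by (simp add: field_simps power2_eq_square)
    finally show ?thesis by (simp add: mult_left_mono)
  qed
  also have "prob E2 \<le> 12/(1-\<epsilon>^2)^2 / (real j * (real j - 1))"
  proof -
    have "prob E2 \<le> 3*\<sigma>^4/(a^2 * (card J)^2)"
      unfolding E2_def by (rule mean_tail[OF indep D s a J(1,2)])
    also have "\<dots> = 12/(1-\<epsilon>^2)^2 / (real j * real j)"
    proof -
      have A: "a^2 * (card J)^2 = ((1-e2)^2 * (real j * real j)) * \<sigma>^4 / 4"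
        unfolding a_def J by (simp add: power_mult_distrib power2_eq_square power4_eq_xxxx)
      have X: "0 < (1-e2)^2 * (real j * real j)" using e2 j by simp
      have "3*\<sigma>^4/(((1-e2)^2 * (real j * real j)) * \<sigma>^4 / 4) = 12/((1-e2)^2 * (real j * real j))"
        using X s by (simp add: field_simps)
      then show ?thesis unfolding A e2_def by (simp add: divide_divide_eq_left)
    qed
    also have "\<dots> \<le> 12/(1-\<epsilon>^2)^2 / (real j * (real j - 1))"
      by (rule divide_left_mono) (use j in auto)
    finally show ?thesis .
  qed
  finally show ?thesis unfolding \<beta>_def e2_def by (simp add: add_divide_distrib)
qed


lemma (in prob_space) tail_bound:
  fixes \<mu> \<sigma> \<epsilon> K :: real
  assumes indep: "indep_vars (\<lambda>_. borel) X UNIV"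
    and D: "\<And>i. distributed M lborel (X i) (\<lambda>x. ennreal (normal_density \<mu> \<sigma> x))"
    and s: "0 < \<sigma>" and e: "0 < \<epsilon>" "\<epsilon> < 1" and m: "2 \<le> m"
    and K: "K = 4/((1-\<epsilon>^2)^2/24)^2 + 12/(1-\<epsilon>^2)^2"
  shows "prob (\<Union>i. {\<omega>\<in>space M. sampleS X (m+i) \<omega> \<le> \<epsilon>*\<sigma>}) \<le> K / (real m - 1)"
proof -
  have Xm[measurable]: "X i \<in> borel_measurable M" for i
    using distributed_measurable[OF D[of i]] by simp
  define B where "B i = {\<omega>\<in>space M. sampleS X (m+i) \<omega> \<le> \<epsilon>*\<sigma>}" for i
  have Bm: "B i \<in> events" for i unfolding B_def sampleS_def xbar_def by measurable
  define f where "f i = K / (real (m+i) - 1)" for i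
  have K0: "0 \<le> K" unfolding K by simp
  have g_eq: "f i - f (Suc i) = K / (real (m+i) * (real (m+i) - 1))" for i
  proof -
    have "real (m+i) - 1 > 0" "real (m+i) > 0" using m by auto
    then show ?thesis unfolding f_def by (simp add: field_simps)
  qed
  have flim: "f \<longlonglongrightarrow> 0"
  proof -
    have "(\<lambda>i. real (m+i) - 1) = (\<lambda>i. (real m - 1) + real i)" by auto
    moreover have "filterlim (\<lambda>i. (real m - 1) + real i) at_top sequentially"
      by (rule filterlim_tendsto_add_at_top[OF tendsto_const filterlim_real_sequentially])
    ultimately have "filterlim (\<lambda>i. real (m+i) - 1) at_top sequentially" by simp
    then show ?thesis unfolding f_def by (rule tendsto_divide_0[OF tendsto_const filterlim_at_top_imp_at_infinity])
  qed
  have gs: "(\<lambda>i. K / (real (m+i) * (real (m+i) - 1))) sums (f 0)"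
    using telescope_sums'[OF flim] g_eq by simp
  have bnd: "prob (B i) \<le> K / (real (m+i) * (real (m+i) - 1))" for i
    unfolding B_def K using sampleS_small[OF indep D s e, of "m+i"] m by simp
  have sumP: "summable (\<lambda>i. prob (B i))"
    by (rule summable_comparison_test'[OF sums_summable[OF gs], of 0]) (use bnd in auto)
  have "prob (\<Union>i. B i) \<le> (\<Sum>i. prob (B i))"
    by (rule finite_measure_subadditive_countably) (use Bm sumP in auto)
  also have "\<dots> \<le> (\<Sum>i. K / (real (m+i) * (real (m+i) - 1)))"
    by (rule suminf_le[OF bnd sumP sums_summable[OF gs]])
  also have "\<dots> = f 0" using gs by (simp add: sums_iff)
  finally show ?thesis unfolding B_def f_def by simp
qed

lemma early_sub:
  fixes \<sigma> A c \<rho> \<epsilon> :: real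
  assumes s: "0 < \<sigma>" and c: "0 < c" and A: "0 < A" and r: "0 < \<rho>"
  shows "early_event M X m k \<rho> A c \<epsilon> (\<sigma> * sqrt (A / c))
      \<subseteq> (\<Union>i. {\<omega>\<in>space M. sampleS X (m+i) \<omega> \<le> \<epsilon>*\<sigma>})"
proof
  fix \<omega> assume w: "\<omega> \<in> early_event M X m k \<rho> A c \<epsilon> (\<sigma> * sqrt (A / c))"
  define q where "q = sqrt (A / c)"
  have q: "0 < q" unfolding q_def using A c by simp
  define T where "T = stopT X m k \<rho> A c \<omega>"
  define L where "L = real (m + k * T)"
  have ex: "\<exists>n. stop_cond X m k \<rho> A c n \<omega>" and sp: "\<omega> \<in> space M"
    and N: "real_of_int (stopN X m k \<rho> A c \<omega>) \<le> \<epsilon> * (\<sigma> * q)"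
    using w unfolding early_event_def q_def by auto
  have st: "stop_cond X m k \<rho> A c T \<omega>"
    unfolding T_def stopT_def by (rule LeastI_ex[OF ex])
  then have st': "\<rho> * sampleS X (m + k*T) \<omega> * q \<le> L"
    unfolding stop_cond_def L_def q_def by simp
  have "stopN X m k \<rho> A c \<omega> = \<lceil>L / \<rho>\<rceil>"
    unfolding stopN_def strict_floor_def L_def T_def by simp
  then have "L / \<rho> \<le> \<epsilon> * (\<sigma> * q)" using N le_of_int_ceiling[of "L/\<rho>"] by linarith
  then have "L \<le> \<rho> * (\<epsilon> * \<sigma>) * q" using r by (simp add: field_simps)
  with st' have "\<rho> * q * sampleS X (m + k*T) \<omega> \<le> \<rho> * q * (\<epsilon> * \<sigma>)" by (simp add: ac_simps)
  then have "sampleS X (m + k*T) \<omega> \<le> \<epsilon> * \<sigma>" using r q by simp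
  then show "\<omega> \<in> (\<Union>i. {\<omega>\<in>space M. sampleS X (m+i) \<omega> \<le> \<epsilon>*\<sigma>})" using sp by blast
qed


theorem lemma5p1:
  fixes M :: "'a measure" and X :: "nat \<Rightarrow> 'a \<Rightarrow> real"
    and \<mu> \<sigma> A \<rho> r :: real and k :: nat
  assumes "prob_space M"
    and "prob_space.indep_vars M (\<lambda>_. borel) X UNIV"
    and "\<And>i. distributed M lborel (X i) (\<lambda>x. ennreal (normal_density \<mu> \<sigma> x))"
    and "\<sigma> > 0" and "A > 0" and "k \<ge> 1" and "0 < \<rho>" and "\<rho> \<le> 1" and "r > 1"
  shows "\<forall>\<epsilon>. 0 < \<epsilon> \<and> \<epsilon> < 1 \<longrightarrow> (\<exists>\<gamma>\<ge>2. \<forall>(m0 :: nat \<Rightarrow> nat) (c :: nat \<Rightarrow> real).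
      (let m = (\<lambda>j. m0 j * k + 1); nstar = (\<lambda>j. \<sigma> * sqrt (A / c j)) in
        filterlim m0 at_top sequentially
        \<and> (\<forall>j. c j > 0)
        \<and> c \<in> O(\<lambda>j. real (m j) powr (- 2 * r))
        \<and> nstar \<in> O(\<lambda>j. real (m j) powr r)
        \<and> limsup (\<lambda>j. ereal (real (m j) / nstar j)) < ereal \<rho>
        \<longrightarrow> (\<lambda>j. measure M (early_event M X (m j) k \<rho> A (c j) \<epsilon> (nstar j)))
              \<in> O(\<lambda>j. nstar j powr (- \<gamma> / (2 * r)))))"
  proof (intro allI impI)
  fix \<epsilon> :: real assume e: "0 < \<epsilon> \<and> \<epsilon> < 1"
  interpret P: prob_space M by fact
  define K where "K = 4/((1-\<epsilon>^2)^2/24)^2 + 12/(1-\<epsilon>^2)^2"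
  have K0: "0 \<le> K" unfolding K_def by simp
  show "\<exists>\<gamma>\<ge>2. \<forall>(m0 :: nat \<Rightarrow> nat) (c :: nat \<Rightarrow> real).
      (let m = (\<lambda>j. m0 j * k + 1); nstar = (\<lambda>j. \<sigma> * sqrt (A / c j)) in
        filterlim m0 at_top sequentially
        \<and> (\<forall>j. c j > 0)
        \<and> c \<in> O(\<lambda>j. real (m j) powr (- 2 * r))
        \<and> nstar \<in> O(\<lambda>j. real (m j) powr r)
        \<and> limsup (\<lambda>j. ereal (real (m j) / nstar j)) < ereal \<rho>
        \<longrightarrow> (\<lambda>j. measure M (early_event M X (m j) k \<rho> A (c j) \<epsilon> (nstar j)))
              \<in> O(\<lambda>j. nstar j powr (- \<gamma> / (2 * r))))"
  proof (rule exI[of _ "2::real"], rule conjI, simp, intro allI, unfold Let_def, intro impI, elim conjE)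
    fix m0 :: "nat \<Rightarrow> nat" and c :: "nat \<Rightarrow> real"
    assume m0: "filterlim m0 at_top sequentially" and c: "\<forall>j. c j > 0"
      and ns: "(\<lambda>j. \<sigma> * sqrt (A / c j)) \<in> O(\<lambda>j. real (m0 j * k + 1) powr r)"
    define m where "m j = m0 j * k + 1" for j
    define nstar where "nstar j = \<sigma> * sqrt (A / c j)" for j
    have nsp: "0 < nstar j" for j unfolding nstar_def using c assms by simp
    from ns obtain C where C: "C > 0"
      and ev1: "eventually (\<lambda>j. norm (nstar j) \<le> C * norm (real (m j) powr r)) sequentially"
      unfolding nstar_def m_def by (elim landau_o.bigE) auto
    have ev2: "eventually (\<lambda>j. 1 \<le> m0 j) sequentially"
      using m0 by (simp add: filterlim_at_top)
    have main: "norm (measure M (early_event M X (m j) k \<rho> A (c j) \<epsilon> (nstar j)))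
        \<le> (2 * K * C powr (1/r)) * norm (nstar j powr (- 2 / (2 * r)))"
      if h1: "norm (nstar j) \<le> C * norm (real (m j) powr r)" and h2: "1 \<le> m0 j" for j
    proof -
      have m2: "2 \<le> m j" unfolding m_def using h2 assms by (simp add: add_mono mult_le_mono) 
      have mp: "0 < real (m j)" using m2 by simp
      have "measure M (early_event M X (m j) k \<rho> A (c j) \<epsilon> (nstar j))
          \<le> measure M (\<Union>i. {\<omega>\<in>space M. sampleS X (m j+i) \<omega> \<le> \<epsilon>*\<sigma>})"
      proof (rule P.finite_measure_mono)
        show "early_event M X (m j) k \<rho> A (c j) \<epsilon> (nstar j) \<subseteq> (\<Union>i. {\<omega>\<in>space M. sampleS X (m j+i) \<omega> \<le> \<epsilon>*\<sigma>})"
          unfolding nstar_def using early_sub[of \<sigma> "c j" A \<rho> M X "m j" k \<epsilon>] assms c by auto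
        have Xm[measurable]: "X i \<in> borel_measurable M" for i
          using distributed_measurable[OF assms(3)[of i]] by simp
        show "(\<Union>i. {\<omega>\<in>space M. sampleS X (m j+i) \<omega> \<le> \<epsilon>*\<sigma>}) \<in> sets M"
          unfolding sampleS_def xbar_def by measurable
      qed
      also have "\<dots> \<le> K / (real (m j) - 1)"
        by (rule P.tail_bound[OF assms(2) assms(3) assms(4)]) (use e m2 K_def in auto)
      also have "\<dots> \<le> 2 * K / real (m j)"
      proof -
        have r2: "2 \<le> real (m j)" using m2 by simp
        have "K * 2 \<le> K * real (m j)" by (rule mult_left_mono[OF r2 K0])
        then show ?thesis using r2 by (simp add: field_simps)
      qed
      also have "\<dots> \<le> (2 * K * C powr (1/r)) * norm (nstar j powr (- 2 / (2 * r)))"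
      proof -
        have rp: "0 < r" using assms by simp
        have "nstar j \<le> C * real (m j) powr r" using h1 nsp by simp
        then have "nstar j powr (1/r) \<le> (C * real (m j) powr r) powr (1/r)"
          using rp nsp[of j] by (intro powr_mono2) auto
        also have "\<dots> = C powr (1/r) * real (m j)"
          using C mp rp by (simp add: powr_mult powr_powr)
        finally have a1: "nstar j powr (1/r) \<le> C powr (1/r) * real (m j)" .
        have pos: "0 < nstar j powr (1/r)" using nsp[of j] by simp
        have e1: "- 2 / (2 * r) = - (1/r)" using rp by simp
        have eqn: "norm (nstar j powr (- 2 / (2 * r))) = 1 / nstar j powr (1/r)"
          unfolding e1 powr_minus using pos by (simp add: divide_inverse)
        have "1 / real (m j) \<le> C powr (1/r) / nstar j powr (1/r)"
          using a1 by (simp add: pos_le_divide_eq[OF pos] pos_divide_le_eq[OF mp])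
        then have "2 * K * (1 / real (m j)) \<le> 2 * K * (C powr (1/r) / nstar j powr (1/r))"
          using K0 by (intro mult_left_mono) auto
        then show ?thesis unfolding eqn by simp
      qed
      finally show ?thesis by simp
    qed
    have "(\<lambda>j. measure M (early_event M X (m j) k \<rho> A (c j) \<epsilon> (nstar j))) \<in> O(\<lambda>j. nstar j powr (- 2 / (2 * r)))"
      by (rule bigoI[OF eventually_mono[OF eventually_conj[OF ev1 ev2]]]) (use main in auto)
    then show "(\<lambda>j. measure M (early_event M X (m0 j * k + 1) k \<rho> A (c j) \<epsilon> (\<sigma> * sqrt (A / c j))))
         \<in> O(\<lambda>j. (\<sigma> * sqrt (A / c j)) powr (- 2 / (2 * r)))"
      unfolding m_def nstar_def .
  qed
qed

end
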